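(* Let $H,A$ be as in the context and $L\subseteq\ker\epsilon\subset H$ a subspace stable under the quantum double action $h\triangleright x=h_{(1)}xSh_{(2)}$, $a\triangleright x=\langle a,x_{(1)}\rangle x_{(2)}-\langle a,x\rangle1$. Define $[\ ,\ ]:L\otimes L\to L$ by $[x,y]=x_{(1)}\,y\,Sx_{(2)}$ and $\Psi:L\otimes L\to L\otimes L$ by \[\Psi(x\otimes y)=[x_{(1)},y]\otimes x_{(2)}-[x,y]\otimes 1\] (which equals $\sum_a e_a\triangleright y\otimes f^a\triangleright x$ for dual bases $\{e_a\}$ of $H$, $\{f^a\}$ of $A$, and so takes values in $L\otimes L$; here $[h,y]:=h_{(1)}ySh_{(2)}$ for $h\in H$). Then for all $x,y,z\in L$, \[[x,[y,z]]=[[x,y],z]+([\ ,[\ ,z]])\circ\Psi(x\otimes y),\qquad [x,y]=xy-\cdot\,\Psi(x\otimes y),\] where $[\ ,[\ ,z]](u\otimes v)=[u,[v,z]]$ and $\cdot$ is multiplication in $H$.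
   Context: $H,A$ are Hopf algebras over $\mathbb{C}$ with invertible antipodes, non-degenerately paired by a Hopf pairing $\langle\ ,\ \rangle$; Sweedler notation. $\Psi$ is the quantum double braiding on $L\otimes L$. *)

theory Defs
  imports Main "HOL.Complex"
begin

text \<open>
  An element of V (x) W is represented by a finite list of pairs (v_i, w_i), standing
  for the sum of the simple tensors v_i (x) w_i.  Two representatives denote the same
  tensor iff they agree on every bilinear form V x W -> C (tensor_eq).
  The coproduct is a map returning such a representative; Sweedler sums
  x_(1) (x) x_(2) are sums over the list Delta x.
\<close>

definition lin_form :: "(complex \<Rightarrow> 'v \<Rightarrow> 'v::ab_group_add) \<Rightarrow> ('v \<Rightarrow> complex) \<Rightarrow> bool" where
  "lin_form sc f \<longleftrightarrow> (\<forall>x y. f (x + y) = f x + f y) \<and> (\<forall>c x. f (sc c x) = c * f x)"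

definition lin_map :: "(complex \<Rightarrow> 'v \<Rightarrow> 'v::ab_group_add) \<Rightarrow> (complex \<Rightarrow> 'w \<Rightarrow> 'w::ab_group_add)
    \<Rightarrow> ('v \<Rightarrow> 'w) \<Rightarrow> bool" where
  "lin_map sv sw f \<longleftrightarrow> (\<forall>x y. f (x + y) = f x + f y) \<and> (\<forall>c x. f (sv c x) = sw c (f x))"

definition bilin_form :: "(complex \<Rightarrow> 'v \<Rightarrow> 'v::ab_group_add) \<Rightarrow> (complex \<Rightarrow> 'w \<Rightarrow> 'w::ab_group_add)
    \<Rightarrow> ('v \<Rightarrow> 'w \<Rightarrow> complex) \<Rightarrow> bool" where
  "bilin_form sv sw b \<longleftrightarrow> (\<forall>y. lin_form sv (\<lambda>x. b x y)) \<and> (\<forall>x. lin_form sw (b x))"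

definition trilin_form :: "(complex \<Rightarrow> 'v \<Rightarrow> 'v::ab_group_add) \<Rightarrow> ('v \<Rightarrow> 'v \<Rightarrow> 'v \<Rightarrow> complex) \<Rightarrow> bool" where
  "trilin_form sv t \<longleftrightarrow> (\<forall>y z. lin_form sv (\<lambda>x. t x y z)) \<and> (\<forall>x z. lin_form sv (\<lambda>y. t x y z))
      \<and> (\<forall>x y. lin_form sv (t x y))"

definition tensor_eq :: "(complex \<Rightarrow> 'v \<Rightarrow> 'v::ab_group_add) \<Rightarrow> (complex \<Rightarrow> 'w \<Rightarrow> 'w::ab_group_add)
    \<Rightarrow> ('v \<times> 'w) list \<Rightarrow> ('v \<times> 'w) list \<Rightarrow> bool" where
  "tensor_eq sv sw t u \<longleftrightarrow>
     (\<forall>b. bilin_form sv sw b \<longrightarrow> (\<Sum>(v,w)\<leftarrow>t. b v w) = (\<Sum>(v,w)\<leftarrow>u. b v w))"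

definition hopf_algebra :: "(complex \<Rightarrow> 'h \<Rightarrow> 'h::ring_1) \<Rightarrow> ('h \<Rightarrow> ('h \<times> 'h) list)
    \<Rightarrow> ('h \<Rightarrow> complex) \<Rightarrow> ('h \<Rightarrow> 'h) \<Rightarrow> bool" where
  "hopf_algebra sc D e S \<longleftrightarrow>
     vector_space sc
   \<and> (\<forall>c x y. sc c (x * y) = sc c x * y \<and> sc c (x * y) = x * sc c y)
   \<comment> \<open>coproduct: linear, multiplicative, unital, coassociative\<close>
   \<and> (\<forall>x y. tensor_eq sc sc (D (x + y)) (D x @ D y))
   \<and> (\<forall>c x. tensor_eq sc sc (D (sc c x)) (map (\<lambda>(a,b). (sc c a, b)) (D x)))
   \<and> (\<forall>x y. tensor_eq sc sc (D (x * y)) (concat (map (\<lambda>(a,b). map (\<lambda>(c,d). (a * c, b * d)) (D y)) (D x))))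
   \<and> tensor_eq sc sc (D 1) [(1, 1)]
   \<and> (\<forall>x t. trilin_form sc t \<longrightarrow>
        (\<Sum>(a,b)\<leftarrow>D x. \<Sum>(c,d)\<leftarrow>D a. t c d b) = (\<Sum>(a,b)\<leftarrow>D x. \<Sum>(c,d)\<leftarrow>D b. t a c d))
   \<comment> \<open>counit: linear, multiplicative, unital, counit axioms\<close>
   \<and> lin_form sc e \<and> (\<forall>x y. e (x * y) = e x * e y) \<and> e 1 = 1
   \<and> (\<forall>x. (\<Sum>(a,b)\<leftarrow>D x. sc (e a) b) = x \<and> (\<Sum>(a,b)\<leftarrow>D x. sc (e b) a) = x)
   \<comment> \<open>antipode: linear, antipode axioms\<close>
   \<and> lin_map sc sc S
   \<and> (\<forall>x. (\<Sum>(a,b)\<leftarrow>D x. S a * b) = sc (e x) 1 \<and> (\<Sum>(a,b)\<leftarrow>D x. a * S b) = sc (e x) 1)"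

definition nondeg_hopf_pairing ::
  "(complex \<Rightarrow> 'a \<Rightarrow> 'a::ring_1) \<Rightarrow> ('a \<Rightarrow> ('a \<times> 'a) list) \<Rightarrow> ('a \<Rightarrow> complex) \<Rightarrow> ('a \<Rightarrow> 'a)
   \<Rightarrow> (complex \<Rightarrow> 'h \<Rightarrow> 'h::ring_1) \<Rightarrow> ('h \<Rightarrow> ('h \<times> 'h) list) \<Rightarrow> ('h \<Rightarrow> complex) \<Rightarrow> ('h \<Rightarrow> 'h)
   \<Rightarrow> ('a \<Rightarrow> 'h \<Rightarrow> complex) \<Rightarrow> bool" where
  "nondeg_hopf_pairing sA DA eA SA sH DH eH SH p \<longleftrightarrow>
     bilin_form sA sH p
   \<and> (\<forall>a b x. p (a * b) x = (\<Sum>(x1,x2)\<leftarrow>DH x. p a x1 * p b x2))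
   \<and> (\<forall>a x y. p a (x * y) = (\<Sum>(a1,a2)\<leftarrow>DA a. p a1 x * p a2 y))
   \<and> (\<forall>x. p 1 x = eH x) \<and> (\<forall>a. p a 1 = eA a)
   \<and> (\<forall>a x. p (SA a) x = p a (SH x))
   \<and> (\<forall>a. (\<forall>x. p a x = 0) \<longrightarrow> a = 0)
   \<and> (\<forall>x. (\<forall>a. p a x = 0) \<longrightarrow> x = 0)"

definition is_subspace :: "(complex \<Rightarrow> 'v \<Rightarrow> 'v::ab_group_add) \<Rightarrow> 'v set \<Rightarrow> bool" where
  "is_subspace sc L \<longleftrightarrow> 0 \<in> L \<and> (\<forall>x\<in>L. \<forall>y\<in>L. x + y \<in> L) \<and> (\<forall>c. \<forall>x\<in>L. sc c x \<in> L)"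

text \<open>[h,y] = h_(1) y S h_(2): also the quantum double action of H.\<close>
definition qbracket :: "('h::ring_1 \<Rightarrow> ('h \<times> 'h) list) \<Rightarrow> ('h \<Rightarrow> 'h) \<Rightarrow> 'h \<Rightarrow> 'h \<Rightarrow> 'h" where
  "qbracket D S h y = (\<Sum>(h1,h2)\<leftarrow>D h. h1 * y * S h2)"

definition actA :: "(complex \<Rightarrow> 'h \<Rightarrow> 'h::ring_1) \<Rightarrow> ('h \<Rightarrow> ('h \<times> 'h) list)
    \<Rightarrow> ('a \<Rightarrow> 'h \<Rightarrow> complex) \<Rightarrow> 'a \<Rightarrow> 'h \<Rightarrow> 'h" where
  "actA sc D p a x = (\<Sum>(x1,x2)\<leftarrow>D x. sc (p a x1) x2) - sc (p a x) 1"

definition qPsi :: "('h::ring_1 \<Rightarrow> ('h \<times> 'h) list) \<Rightarrow> ('h \<Rightarrow> 'h) \<Rightarrow> 'h \<Rightarrow> 'h \<Rightarrow> ('h \<times> 'h) list" where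
  "qPsi D S x y = map (\<lambda>(x1,x2). (qbracket D S x1 y, x2)) (D x) @ [(- qbracket D S x y, 1)]"

end

theory Submission
  imports Defs
begin


lemma sum_list_swap:
  "(\<Sum>x\<leftarrow>xs. \<Sum>y\<leftarrow>ys. f x y) = (\<Sum>y\<leftarrow>ys. \<Sum>x\<leftarrow>xs. (f x y :: 'b::comm_monoid_add))"
  by (induction xs) (simp_all add: sum_list_addf)

lemma sum_list_swap2:
  "(\<Sum>(a,b)\<leftarrow>xs. \<Sum>(c,d)\<leftarrow>ys. f a b c d) = (\<Sum>(c,d)\<leftarrow>ys. \<Sum>(a,b)\<leftarrow>xs. (f a b c d :: 'b::comm_monoid_add))"
  using sum_list_swap[of "\<lambda>x y. f (fst x) (snd x) (fst y) (snd y)" ys xs]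
  by (simp add: case_prod_beta')

locale hopfH =
  fixes sc :: "complex \<Rightarrow> 'h::ring_1 \<Rightarrow> 'h" and D :: "'h \<Rightarrow> ('h \<times> 'h) list"
    and e :: "'h \<Rightarrow> complex" and S :: "'h \<Rightarrow> 'h" and \<phi> :: "'a \<Rightarrow> 'h \<Rightarrow> complex"
  assumes hopf: "hopf_algebra sc D e S"
    and sep: "\<And>x. (\<And>\<alpha>. \<phi> \<alpha> x = 0) \<Longrightarrow> x = 0"
    and phi_lin: "\<And>\<alpha>. lin_form sc (\<phi> \<alpha>)"
begin

abbreviation lin where "lin f \<equiv> lin_map sc sc f"

lemma vs: "vector_space sc" using hopf unfolding hopf_algebra_def by blast

lemma sc_add: "sc c (x + y) = sc c x + sc c y"
  using vs unfolding vector_space_def by blast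
lemma sc_addc: "sc (c + d) x = sc c x + sc d x"
  using vs unfolding vector_space_def by blast
lemma sc_sc: "sc c (sc d x) = sc (c * d) x"
  using vs unfolding vector_space_def by blast
lemma sc_one[simp]: "sc 1 x = x"
  using vs unfolding vector_space_def by blast
lemma sc_multl: "sc c (x * y) = sc c x * y" and sc_multr: "sc c (x * y) = x * sc c y"
  using hopf unfolding hopf_algebra_def by blast+

lemma D_add: "tensor_eq sc sc (D (x + y)) (D x @ D y)"
  using hopf unfolding hopf_algebra_def by blast
lemma D_sc: "tensor_eq sc sc (D (sc c x)) (map (\<lambda>(a,b). (sc c a, b)) (D x))"
  using hopf unfolding hopf_algebra_def by blast
lemma D_mult: "tensor_eq sc sc (D (x * y)) (concat (map (\<lambda>(a,b). map (\<lambda>(c,d). (a * c, b * d)) (D y)) (D x)))"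
  using hopf unfolding hopf_algebra_def by blast
lemma D_one: "tensor_eq sc sc (D 1) [(1, 1)]"
  using hopf unfolding hopf_algebra_def by blast
lemma coass: "trilin_form sc t \<Longrightarrow>
        (\<Sum>(a,b)\<leftarrow>D x. \<Sum>(c,d)\<leftarrow>D a. t c d b) = (\<Sum>(a,b)\<leftarrow>D x. \<Sum>(c,d)\<leftarrow>D b. t a c d)"
  using hopf unfolding hopf_algebra_def by blast
lemma e_lin: "lin_form sc e" and e_mult: "e (x * y) = e x * e y" and e_one: "e 1 = 1"
  using hopf unfolding hopf_algebra_def by blast+
lemma counit1: "(\<Sum>(a,b)\<leftarrow>D x. sc (e a) b) = x" and counit2: "(\<Sum>(a,b)\<leftarrow>D x. sc (e b) a) = x"
  using hopf unfolding hopf_algebra_def by blast+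
lemma S_lin: "lin S" using hopf unfolding hopf_algebra_def by blast
lemma antip1: "(\<Sum>(a,b)\<leftarrow>D x. S a * b) = sc (e x) 1" and antip2: "(\<Sum>(a,b)\<leftarrow>D x. a * S b) = sc (e x) 1"
  using hopf unfolding hopf_algebra_def by blast+

lemma sc_zero[simp]: "sc c 0 = 0"
  by (metis add_cancel_right_right sc_add)
lemma sc_zeroc[simp]: "sc 0 x = 0"
  by (metis add_cancel_right_right sc_addc add_0)
lemma sc_minus: "sc c (- x) = - sc c x"
  by (metis add_eq_0_iff sc_add sc_zero)
lemma sc_sum_list: "sc c (sum_list (map f xs)) = sum_list (map (\<lambda>x. sc c (f x)) xs)"
  by (induction xs) (simp_all add: sc_add)
lemma sc_sum_listc: "sc (sum_list (map f xs)) x = sum_list (map (\<lambda>y. sc (f y) x) xs)"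
  by (induction xs) (simp_all add: sc_addc)

lemma lin_add: "lin f \<Longrightarrow> f (x + y) = f x + f y" by (simp add: lin_map_def)
lemma lin_sc: "lin f \<Longrightarrow> f (sc c x) = sc c (f x)" by (simp add: lin_map_def)
lemma lin_zero: "lin f \<Longrightarrow> f 0 = 0" by (metis add_cancel_right_right lin_add)
lemma lin_minus: "lin f \<Longrightarrow> f (- x) = - f x" by (metis add_eq_0_iff lin_add lin_zero)
lemma lin_diff: "lin f \<Longrightarrow> f (x - y) = f x - f y" by (metis diff_conv_add_uminus lin_add lin_minus)
lemma lin_sum_list: "lin f \<Longrightarrow> f (sum_list (map g xs)) = sum_list (map (\<lambda>x. f (g x)) xs)"
  by (induction xs) (simp_all add: lin_add lin_zero)

lemma lf_add: "lin_form sc f \<Longrightarrow> f (x + y) = f x + f y" by (simp add: lin_form_def)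
lemma lf_sc: "lin_form sc f \<Longrightarrow> f (sc c x) = c * f x" by (simp add: lin_form_def)
lemma lf_zero: "lin_form sc f \<Longrightarrow> f 0 = 0" by (metis add_cancel_right_right lf_add)
lemma lf_minus: "lin_form sc f \<Longrightarrow> f (- x) = - f x" by (metis add_eq_0_iff lf_add lf_zero)
lemma lf_diff: "lin_form sc f \<Longrightarrow> f (x - y) = f x - f y" by (metis diff_conv_add_uminus lf_add lf_minus)
lemma lf_sum_list: "lin_form sc f \<Longrightarrow> f (sum_list (map g xs)) = sum_list (map (\<lambda>x. f (g x)) xs)"
  by (induction xs) (simp_all add: lf_add lf_zero)

lemma lin_id: "lin (\<lambda>x. x)" by (simp add: lin_map_def)
lemma lin_multR: "lin f \<Longrightarrow> lin (\<lambda>x. f x * c)"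
  by (simp add: lin_map_def distrib_right sc_multl)
lemma lin_multL: "lin f \<Longrightarrow> lin (\<lambda>x. c * f x)"
  by (simp add: lin_map_def distrib_left sc_multr)
lemma lin_S: "lin f \<Longrightarrow> lin (\<lambda>x. S (f x))"
  using S_lin by (simp add: lin_map_def)
lemma lin_plus: "lin f \<Longrightarrow> lin g \<Longrightarrow> lin (\<lambda>x. f x + g x)"
  by (simp add: lin_map_def sc_add)
lemma lin_scal: "lin f \<Longrightarrow> lin (\<lambda>x. sc c (f x))"
  by (simp add: lin_map_def sc_add sc_sc mult.commute)
lemma lin_sumL: "(\<And>a b. lin (g a b)) \<Longrightarrow> lin (\<lambda>x. \<Sum>(a,b)\<leftarrow>l. g a b x)"
proof (induction l)
  case Nil then show ?case by (simp add: lin_map_def)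
next
  case (Cons p l) then show ?case
    by (cases p) (simp add: lin_map_def sc_add)
qed

lemma lin_S0: "lin S" by (rule S_lin)

definition bil where "bil g \<longleftrightarrow> (\<forall>w. lin (\<lambda>v. g v w)) \<and> (\<forall>v. lin (g v))"

lemma bilI: "(\<And>w. lin (\<lambda>v. g v w)) \<Longrightarrow> (\<And>v. lin (g v)) \<Longrightarrow> bil g"
  by (simp add: bil_def)

lemma eqI_phi: "(\<And>\<alpha>. \<phi> \<alpha> x = \<phi> \<alpha> y) \<Longrightarrow> x = y"
  using sep[of "x - y"] by (simp add: lf_diff[OF phi_lin])

lemma phi_sum: "\<phi> \<alpha> (\<Sum>(v,w)\<leftarrow>t. g v w) = (\<Sum>(v,w)\<leftarrow>t. \<phi> \<alpha> (g v w))"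
  by (subst lf_sum_list[OF phi_lin]) (simp add: case_prod_beta')

lemma teq_sum: assumes "tensor_eq sc sc t u" "bil g"
  shows "(\<Sum>(v,w)\<leftarrow>t. g v w) = (\<Sum>(v,w)\<leftarrow>u. g v w)"
proof (rule eqI_phi)
  fix \<alpha>
  have "bilin_form sc sc (\<lambda>v w. \<phi> \<alpha> (g v w))"
    using assms(2) phi_lin unfolding bil_def bilin_form_def lin_form_def lin_map_def by simp
  then show "\<phi> \<alpha> (\<Sum>(v,w)\<leftarrow>t. g v w) = \<phi> \<alpha> (\<Sum>(v,w)\<leftarrow>u. g v w)"
    using assms(1) unfolding tensor_eq_def phi_sum by blast
qed

lemma coassH: assumes "\<And>b c. lin (\<lambda>a. t a b c)" "\<And>a c. lin (\<lambda>b. t a b c)" "\<And>a b. lin (t a b)"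
  shows "(\<Sum>(a,b)\<leftarrow>D x. \<Sum>(c,d)\<leftarrow>D a. t c d b) = (\<Sum>(a,b)\<leftarrow>D x. \<Sum>(c,d)\<leftarrow>D b. t a c d)"
proof (rule eqI_phi)
  fix \<alpha>
  have "trilin_form sc (\<lambda>a b c. \<phi> \<alpha> (t a b c))"
    using assms phi_lin unfolding trilin_form_def lin_form_def lin_map_def by simp
  from coass[OF this, of x] show "\<phi> \<alpha> (\<Sum>(a,b)\<leftarrow>D x. \<Sum>(c,d)\<leftarrow>D a. t c d b) = \<phi> \<alpha> (\<Sum>(a,b)\<leftarrow>D x. \<Sum>(c,d)\<leftarrow>D b. t a c d)"
    by (simp add: phi_sum)
qed

lemma lin_Dsum: assumes "bil g" "lin f" shows "lin (\<lambda>x. \<Sum>(a,b)\<leftarrow>D (f x). g a b)"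
  unfolding lin_map_def
proof (intro conjI allI)
  fix x y
  show "(\<Sum>(a,b)\<leftarrow>D (f (x + y)). g a b) = (\<Sum>(a,b)\<leftarrow>D (f x). g a b) + (\<Sum>(a,b)\<leftarrow>D (f y). g a b)"
    using teq_sum[OF D_add assms(1)] by (simp add: lin_add[OF assms(2)])
next
  fix c x
  have "(\<Sum>(a,b)\<leftarrow>D (f (sc c x)). g a b) = (\<Sum>(a,b)\<leftarrow>map (\<lambda>(a,b). (sc c a, b)) (D (f x)). g a b)"
    using teq_sum[OF D_sc assms(1)] by (simp add: lin_sc[OF assms(2)])
  also have "\<dots> = (\<Sum>(a,b)\<leftarrow>D (f x). sc c (g a b))"
  proof -
    have "\<And>a b. g (sc c a) b = sc c (g a b)"
      using assms(1) unfolding bil_def by (metis lin_sc)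
    then show ?thesis by (simp add: case_prod_beta' o_def)
  qed
  also have "\<dots> = sc c (\<Sum>(a,b)\<leftarrow>D (f x). g a b)"
    by (simp add: sc_sum_list case_prod_beta')
  finally show "(\<Sum>(a,b)\<leftarrow>D (f (sc c x)). g a b) = sc c (\<Sum>(a,b)\<leftarrow>D (f x). g a b)" .
qed

end


context hopfH begin

lemmas linI = lin_multR lin_multL lin_S lin_id lin_plus lin_sumL lin_scal

lemma antip1': "(\<Sum>x\<leftarrow>D h. S (fst x) * snd x) = sc (e h) 1" using antip1[of h] by (simp add: case_prod_beta')
lemma antip2': "(\<Sum>x\<leftarrow>D h. fst x * S (snd x)) = sc (e h) 1" using antip2[of h] by (simp add: case_prod_beta')
lemma counit1': "(\<Sum>x\<leftarrow>D h. sc (e (fst x)) (snd x)) = h" using counit1[of h] by (simp add: case_prod_beta')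
lemma counit2': "(\<Sum>x\<leftarrow>D h. sc (e (snd x)) (fst x)) = h" using counit2[of h] by (simp add: case_prod_beta')

lemma lin_pull: "lin f \<Longrightarrow> (\<Sum>(a,b)\<leftarrow>l. f (g a b)) = f (\<Sum>(a,b)\<leftarrow>l. g a b)"
  by (simp add: lin_sum_list case_prod_beta')

lemma mult_sc1: "x * sc c 1 = sc c x" by (metis sc_multr mult_1_right)
lemma sc1_mult: "sc c 1 * x = sc c x" by (metis sc_multl mult_1_left)

lemma S_one: "S 1 = 1"
proof -
  have "(\<Sum>(a,b)\<leftarrow>D 1. S a * b) = (\<Sum>(a,b)\<leftarrow>[(1,1)]. S a * b)"
    by (rule teq_sum[OF D_one]) (rule bilI; rule lin_multR lin_multL; rule lin_S lin_id lin_multL; rule lin_id)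
  then show ?thesis using antip1[of 1] by (simp add: e_one)
qed

lemma concat_sum: "(\<Sum>(u,v)\<leftarrow>concat (map (\<lambda>(a,b). map (\<lambda>(c,d). (F a b c d, G a b c d)) ys) xs). g u v)
   = (\<Sum>(a,b)\<leftarrow>xs. \<Sum>(c,d)\<leftarrow>ys. (g (F a b c d) (G a b c d) :: 'b::comm_monoid_add))"
  by (induction xs) (auto simp: case_prod_beta' o_def)

lemma D_mult_sum: "bil g \<Longrightarrow> (\<Sum>(u,v)\<leftarrow>D (x*y). g u v) = (\<Sum>(a,b)\<leftarrow>D x. \<Sum>(c,d)\<leftarrow>D y. g (a*c) (b*d))"
proof -
  assume "bil g"
  then have "(\<Sum>(u,v)\<leftarrow>D (x*y). g u v) = (\<Sum>(u,v)\<leftarrow>concat (map (\<lambda>(a,b). map (\<lambda>(c,d). (a * c, b * d)) (D y)) (D x)). g u v)"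
    by (rule teq_sum[OF D_mult])
  also have "\<dots> = (\<Sum>(a,b)\<leftarrow>D x. \<Sum>(c,d)\<leftarrow>D y. g (a*c) (b*d))"
    by (rule concat_sum)
  finally show ?thesis .
qed

lemma M_eq: "(\<Sum>(u1,u2)\<leftarrow>D u. \<Sum>(v1,v2)\<leftarrow>D v. u1*v1*S v2*S u2) = sc (e u * e v) 1"
proof -
  have "\<And>u1 u2. (\<Sum>(v1,v2)\<leftarrow>D v. u1*v1*S v2*S u2) = u1 * (\<Sum>(v1,v2)\<leftarrow>D v. v1*S v2) * S u2"
  proof -
    fix u1 u2
    have "(\<Sum>(v1,v2)\<leftarrow>D v. u1*v1*S v2*S u2) = (\<Sum>(v1,v2)\<leftarrow>D v. (\<lambda>w. u1*w*S u2) (v1*S v2))"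
      by (simp add: mult.assoc)
    also have "\<dots> = (\<lambda>w. u1*w*S u2) (\<Sum>(v1,v2)\<leftarrow>D v. v1*S v2)"
      by (rule lin_pull) (intro linI)
    finally show "(\<Sum>(v1,v2)\<leftarrow>D v. u1*v1*S v2*S u2) = u1 * (\<Sum>(v1,v2)\<leftarrow>D v. v1*S v2) * S u2" by simp
  qed
  then have "(\<Sum>(u1,u2)\<leftarrow>D u. \<Sum>(v1,v2)\<leftarrow>D v. u1*v1*S v2*S u2) = (\<Sum>(u1,u2)\<leftarrow>D u. sc (e v) (u1 * S u2))"
    by (simp add: antip2 mult_sc1 sc_multl)
  also have "\<dots> = sc (e v) (sc (e u) 1)" by (simp add: sc_sum_list[symmetric] antip2' case_prod_beta')
  finally show ?thesis by (simp add: sc_sc mult.commute)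
qed

end


context hopfH begin

lemma Ssc: "S (sc c x) = sc c (S x)" using lin_sc[OF S_lin] .

lemma AM_E1: "(\<Sum>(a1,a2)\<leftarrow>D a. \<Sum>(b1,b2)\<leftarrow>D b. S(a1*b1) * (\<Sum>(c,d)\<leftarrow>D a2. \<Sum>(f,g)\<leftarrow>D b2. c*f*S g*S d))
   = S (a*b)"
proof -
  have pw: "\<And>x y c d. S(x*y) * sc (c*d) 1 = S (sc c x * sc d y)"
    by (simp add: sc_multl[symmetric] sc_multr[symmetric] sc_sc Ssc mult_sc1 mult.commute)
  have "(\<Sum>(a1,a2)\<leftarrow>D a. \<Sum>(b1,b2)\<leftarrow>D b. S(a1*b1) * (\<Sum>(c,d)\<leftarrow>D a2. \<Sum>(f,g)\<leftarrow>D b2. c*f*S g*S d))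
     = (\<Sum>(a1,a2)\<leftarrow>D a. \<Sum>(b1,b2)\<leftarrow>D b. S (sc (e a2) a1 * sc (e b2) b1))"
    by (simp add: M_eq pw)
  also have "\<dots> = (\<Sum>(a1,a2)\<leftarrow>D a. S (sc (e a2) a1 * (\<Sum>(b1,b2)\<leftarrow>D b. sc (e b2) b1)))"
  proof -
    have "(\<Sum>(b1,b2)\<leftarrow>D b. S (sc (e a2) a1 * sc (e b2) b1)) = S (sc (e a2) a1 * (\<Sum>(b1,b2)\<leftarrow>D b. sc (e b2) b1))" for a1 a2
      by (rule lin_pull[of "\<lambda>w. S (sc (e a2) a1 * w)", simplified]) (intro linI)
    then show ?thesis by simp
  qed
  also have "\<dots> = S ((\<Sum>(a1,a2)\<leftarrow>D a. sc (e a2) a1) * (\<Sum>(b1,b2)\<leftarrow>D b. sc (e b2) b1))"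
    by (rule lin_pull[of "\<lambda>w. S (w * (\<Sum>(b1,b2)\<leftarrow>D b. sc (e b2) b1))", simplified]) (intro linI)
  also have "\<dots> = S (a*b)" by (simp add: counit2)
  finally show ?thesis .
qed


lemma AP: "(\<Sum>(c,d)\<leftarrow>D p. \<Sum>(f,g)\<leftarrow>D r. S(c*f)*(d*g)) = sc (e p * e r) 1"
proof -
  have "(\<Sum>(c,d)\<leftarrow>D p. \<Sum>(f,g)\<leftarrow>D r. S(c*f)*(d*g)) = (\<Sum>(u,v)\<leftarrow>D (p*r). S u * v)"
    by (rule D_mult_sum[symmetric]) (rule bilI; intro linI)
  then show ?thesis by (simp add: antip1 e_mult)
qed

lemma AM_E2: "(\<Sum>(a1,a2)\<leftarrow>D a. \<Sum>(b1,b2)\<leftarrow>D b. S(a1*b1) * (\<Sum>(c,d)\<leftarrow>D a2. \<Sum>(f,g)\<leftarrow>D b2. c*f*S g*S d))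
   = S b * S a"
proof -
  have "(\<Sum>(a1,a2)\<leftarrow>D a. \<Sum>(b1,b2)\<leftarrow>D b. S(a1*b1) * (\<Sum>(c,d)\<leftarrow>D a2. \<Sum>(f,g)\<leftarrow>D b2. c*f*S g*S d))
     = (\<Sum>(a1,a2)\<leftarrow>D a. \<Sum>(b1,b2)\<leftarrow>D b. \<Sum>(c,d)\<leftarrow>D a2. \<Sum>(f,g)\<leftarrow>D b2. S(a1*b1)*c*f*S g*S d)"
    by (simp add: sum_list_const_mult[symmetric] case_prod_beta' mult.assoc)
  also have "\<dots> = (\<Sum>(a1,a2)\<leftarrow>D a. \<Sum>(c,d)\<leftarrow>D a2. \<Sum>(b1,b2)\<leftarrow>D b. \<Sum>(f,g)\<leftarrow>D b2. S(a1*b1)*c*f*S g*S d)"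
    by (simp add: sum_list_swap2[where xs="D b"])
  also have "\<dots> = (\<Sum>(p,q)\<leftarrow>D a. \<Sum>(c,d)\<leftarrow>D p. \<Sum>(b1,b2)\<leftarrow>D b. \<Sum>(f,g)\<leftarrow>D b2. S(c*b1)*d*f*S g*S q)"
    by (rule coassH[symmetric, of "\<lambda>x y z. \<Sum>(b1,b2)\<leftarrow>D b. \<Sum>(f,g)\<leftarrow>D b2. S(x*b1)*y*f*S g*S z", simplified]; intro linI)
  also have "\<dots> = (\<Sum>(p,q)\<leftarrow>D a. \<Sum>(c,d)\<leftarrow>D p. \<Sum>(r,s)\<leftarrow>D b. \<Sum>(f,g)\<leftarrow>D r. S(c*f)*d*g*S s*S q)"
  proof -
    have "(\<Sum>(b1,b2)\<leftarrow>D b. \<Sum>(f,g)\<leftarrow>D b2. S(c*b1)*d*f*S g*S q) = (\<Sum>(r,s)\<leftarrow>D b. \<Sum>(f,g)\<leftarrow>D r. S(c*f)*d*g*S s*S q)" for c d q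
      by (rule coassH[symmetric, of "\<lambda>x y z. S(c*x)*d*y*S z*S q", simplified]; intro linI)
    then show ?thesis by simp
  qed
  also have "\<dots> = (\<Sum>(p,q)\<leftarrow>D a. \<Sum>(r,s)\<leftarrow>D b. \<Sum>(c,d)\<leftarrow>D p. \<Sum>(f,g)\<leftarrow>D r. S(c*f)*d*g*S s*S q)"
    by (simp add: sum_list_swap2[where xs="D b"])
  also have "\<dots> = (\<Sum>(p,q)\<leftarrow>D a. \<Sum>(r,s)\<leftarrow>D b. (\<Sum>(c,d)\<leftarrow>D p. \<Sum>(f,g)\<leftarrow>D r. S(c*f)*(d*g)) * (S s*S q))"
    by (simp add: sum_list_mult_const[symmetric] case_prod_beta' mult.assoc)
  also have "\<dots> = (\<Sum>(p,q)\<leftarrow>D a. \<Sum>(r,s)\<leftarrow>D b. S (sc (e r) s) * S (sc (e p) q))"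
    by (simp add: AP sc1_mult Ssc sc_multl[symmetric] sc_multr[symmetric] sc_sc mult.commute)
  also have "\<dots> = (\<Sum>(p,q)\<leftarrow>D a. (\<Sum>(r,s)\<leftarrow>D b. S (sc (e r) s)) * S (sc (e p) q))"
    by (simp add: sum_list_mult_const[symmetric] case_prod_beta')
  also have "\<dots> = (\<Sum>(r,s)\<leftarrow>D b. S (sc (e r) s)) * (\<Sum>(p,q)\<leftarrow>D a. S (sc (e p) q))"
    by (simp add: sum_list_const_mult[symmetric] case_prod_beta')
  also have "\<dots> = S b * S a"
    using lin_pull[OF S_lin, of "\<lambda>r s. sc (e r) s"] by (simp add: counit1)
  finally show ?thesis .
qed

lemma AM: "S (a*b) = S b * S a"
  using AM_E1[where a=a and b=b] AM_E2[where a=a and b=b] by simp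

end


context hopfH begin

abbreviation ad where "ad \<equiv> qbracket D S"

lemma ad_def': "ad h w = (\<Sum>(a,b)\<leftarrow>D h. a*w*S b)" by (simp add: qbracket_def)

lemma lin_ad: "lin (\<lambda>h. ad h w)"
  unfolding qbracket_def
  using lin_Dsum[of "\<lambda>a b. a*w*S b" "\<lambda>x. x"] by (simp add: lin_id bilI linI)

lemma ad_mult: "ad (g*h) w = ad g (ad h w)"
proof -
  have "ad (g*h) w = (\<Sum>(a,b)\<leftarrow>D g. \<Sum>(c,d)\<leftarrow>D h. (a*c)*w*S(b*d))"
    unfolding qbracket_def by (rule D_mult_sum) (rule bilI; intro linI)
  also have "\<dots> = (\<Sum>(a,b)\<leftarrow>D g. \<Sum>(c,d)\<leftarrow>D h. a*(c*w*S d)*S b)"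
    by (simp add: AM mult.assoc)
  also have "\<dots> = (\<Sum>(a,b)\<leftarrow>D g. a*(\<Sum>(c,d)\<leftarrow>D h. c*w*S d)*S b)"
  proof -
    have "(\<Sum>(c,d)\<leftarrow>D h. a*(c*w*S d)*S b) = a*(\<Sum>(c,d)\<leftarrow>D h. c*w*S d)*S b" for a b
      by (rule lin_pull[of "\<lambda>u. a*u*S b", simplified]) (intro linI)
    then show ?thesis by simp
  qed
  also have "\<dots> = ad g (ad h w)" by (simp add: qbracket_def)
  finally show ?thesis .
qed

lemma F2: "(\<Sum>(a,b)\<leftarrow>D x. ad a y * b) = x*y"
proof -
  have "(\<Sum>(a,b)\<leftarrow>D x. ad a y * b) = (\<Sum>(a,b)\<leftarrow>D x. \<Sum>(c,d)\<leftarrow>D a. c*y*S d*b)"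
    unfolding qbracket_def by (simp add: sum_list_mult_const[symmetric] case_prod_beta')
  also have "\<dots> = (\<Sum>(a,b)\<leftarrow>D x. \<Sum>(c,d)\<leftarrow>D b. a*y*S c*d)"
    by (rule coassH[of "\<lambda>c d b. c*y*S d*b", simplified]; intro linI)
  also have "\<dots> = (\<Sum>(a,b)\<leftarrow>D x. a*y*(\<Sum>(c,d)\<leftarrow>D b. S c*d))"
  proof -
    have "(\<Sum>(c,d)\<leftarrow>D b. a*y*S c*d) = a*y*(\<Sum>(c,d)\<leftarrow>D b. S c*d)" for a b
      using lin_pull[OF lin_multL[OF lin_id, of "a*y"], of "\<lambda>c d. S c * d" "D b"] by (simp add: mult.assoc)
    then show ?thesis by simp
  qed
  also have "\<dots> = (\<Sum>(a,b)\<leftarrow>D x. sc (e b) a * y)"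
    by (simp add: antip1 mult_sc1 sc_multl)
  also have "\<dots> = x * y"
    by (simp add: sum_list_mult_const case_prod_beta' counit2')
  finally show ?thesis .
qed

lemma ad_one: "ad 1 z = z"
proof -
  have "ad 1 z = (\<Sum>(a,b)\<leftarrow>[(1,1)]. a*z*S b)"
    unfolding qbracket_def by (rule teq_sum[OF D_one]) (rule bilI; intro linI)
  then show ?thesis by (simp add: S_one)
qed

lemma KEY: "ad x (ad y z) = (\<Sum>(a,b)\<leftarrow>D x. ad (ad a y) (ad b z))"
proof -
  have "ad x (ad y z) = ad (x*y) z" by (simp add: ad_mult)
  also have "\<dots> = ad (\<Sum>(a,b)\<leftarrow>D x. ad a y * b) z" by (simp add: F2)
  also have "\<dots> = (\<Sum>(a,b)\<leftarrow>D x. ad (ad a y * b) z)"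
    by (rule lin_pull[OF lin_ad, symmetric])
  also have "\<dots> = (\<Sum>(a,b)\<leftarrow>D x. ad (ad a y) (ad b z))" by (simp add: ad_mult)
  finally show ?thesis .
qed

lemma main:
  "ad x (ad y z) = ad (ad x y) z + (\<Sum>(u,v)\<leftarrow>qPsi D S x y. ad u (ad v z))
   \<and> ad x y = x * y - (\<Sum>(u,v)\<leftarrow>qPsi D S x y. u * v)"
proof
  have "(\<Sum>(u,v)\<leftarrow>qPsi D S x y. ad u (ad v z)) = (\<Sum>(a,b)\<leftarrow>D x. ad (ad a y) (ad b z)) + ad (- ad x y) (ad 1 z)"
    by (simp add: qPsi_def case_prod_beta' o_def)
  also have "\<dots> = ad x (ad y z) - ad (ad x y) z"
    by (simp only: KEY[symmetric] ad_one lin_minus[OF lin_ad] diff_conv_add_uminus)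
  finally show "ad x (ad y z) = ad (ad x y) z + (\<Sum>(u,v)\<leftarrow>qPsi D S x y. ad u (ad v z))" by simp
next
  show "ad x y = x * y - (\<Sum>(u,v)\<leftarrow>qPsi D S x y. u * v)"
    using F2[where x=x and y=y] by (simp add: qPsi_def case_prod_beta' o_def)
qed

end

theorem proposition2p4:
  fixes sH :: "complex \<Rightarrow> 'h \<Rightarrow> 'h::ring_1" and DH :: "'h \<Rightarrow> ('h \<times> 'h) list"
    and eH :: "'h \<Rightarrow> complex" and SH :: "'h \<Rightarrow> 'h"
    and sA :: "complex \<Rightarrow> 'a \<Rightarrow> 'a::ring_1" and DA :: "'a \<Rightarrow> ('a \<times> 'a) list"
    and eA :: "'a \<Rightarrow> complex" and SA :: "'a \<Rightarrow> 'a"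
    and p :: "'a \<Rightarrow> 'h \<Rightarrow> complex" and L :: "'h set"
  assumes "hopf_algebra sH DH eH SH" and "bij SH"
    and "hopf_algebra sA DA eA SA" and "bij SA"
    and "nondeg_hopf_pairing sA DA eA SA sH DH eH SH p"
    and "is_subspace sH L" and "L \<subseteq> {x. eH x = 0}"
    and "\<forall>h. \<forall>x\<in>L. qbracket DH SH h x \<in> L"
    and "\<forall>a. \<forall>x\<in>L. actA sH DH p a x \<in> L"
    and "x \<in> L" and "y \<in> L" and "z \<in> L"
  shows "(qbracket DH SH x (qbracket DH SH y z)
           = qbracket DH SH (qbracket DH SH x y) z
             + (\<Sum>(u,v)\<leftarrow>qPsi DH SH x y. qbracket DH SH u (qbracket DH SH v z)))
       \<and> qbracket DH SH x y = x * y - (\<Sum>(u,v)\<leftarrow>qPsi DH SH x y. u * v)"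
proof -
  have "hopfH sH DH eH SH p"
  proof -
    have nd: "nondeg_hopf_pairing sA DA eA SA sH DH eH SH p" by (rule assms(5))
    have s: "\<forall>x. (\<forall>a. p a x = 0) \<longrightarrow> x = 0" using nd unfolding nondeg_hopf_pairing_def by blast
    have l: "\<forall>a. lin_form sH (p a)" using nd unfolding nondeg_hopf_pairing_def bilin_form_def by blast
    show ?thesis unfolding hopfH_def using assms(1) s l by blast
  qed
  then show ?thesis by (rule hopfH.main)
qed

end
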